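(* Let $1<p<\infty$. The space $h_p$ is not monotone, and so it is neither normal nor perfect.
   Context: Sequences are complex sequences indexed by positive integers, and $\Delta x_k=x_k-x_{k+1}$. For $1<p<\infty$, $$h_p=\Big\{x:\ \sum_{k=1}^{\infty}(k|\Delta x_k|)^p<\infty,\ \lim_k x_k=0\Big\}.$$ Let $\lambda$ be a sequence space. - $\lambda$ is perfect if $\lambda=\lambda^{\alpha\alpha}$, where $X^\alpha=\{a: (a_kx_k)\in\ell_1\ \forall x\in X\}$. - $\lambda$ is normal if $y\in\lambda$ whenever $|y_k|\le|x_k|$ for all $k$, for some $x\in\lambda$. - $\lambda$ is monotone if it contains the canonical preimages of all its step spaces, i.e. for every $x\in\lambda$ and every set $J$ of indices, the sequence equal to $x_k$ for $k\in J$ and $0$ otherwise belongs to $\lambda$. *)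

theory Defs
  imports "HOL-Analysis.Analysis"
begin

text \<open>Sequences indexed by positive integers are represented as functions
  nat \<Rightarrow> complex, where the value at n represents the (n+1)-th term.
  Hence the weight k in the definition of h_p becomes real (Suc n).\<close>

definition hp :: "real \<Rightarrow> (nat \<Rightarrow> complex) set" where
  "hp p = {x. summable (\<lambda>n. (real (Suc n) * cmod (x n - x (Suc n))) powr p)
              \<and> x \<longlonglongrightarrow> 0}"

definition alpha_dual :: "(nat \<Rightarrow> complex) set \<Rightarrow> (nat \<Rightarrow> complex) set" where
  "alpha_dual X = {a. \<forall>x\<in>X. summable (\<lambda>n. cmod (a n * x n))}"

definition seq_perfect :: "(nat \<Rightarrow> complex) set \<Rightarrow> bool" where
  "seq_perfect L \<longleftrightarrow> L = alpha_dual (alpha_dual L)"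

definition seq_normal :: "(nat \<Rightarrow> complex) set \<Rightarrow> bool" where
  "seq_normal L \<longleftrightarrow> (\<forall>x\<in>L. \<forall>y. (\<forall>n. cmod (y n) \<le> cmod (x n)) \<longrightarrow> y \<in> L)"

definition seq_monotone :: "(nat \<Rightarrow> complex) set \<Rightarrow> bool" where
  "seq_monotone L \<longleftrightarrow> (\<forall>x\<in>L. \<forall>J. (\<lambda>n. if n \<in> J then x n else 0) \<in> L)"

end

theory Submission
  imports Defs
begin

lemma alpha_dual_normal: "seq_normal (alpha_dual X)"
  unfolding seq_normal_def
proof (intro ballI allI impI)
  fix a y
  assume aX: "a \<in> alpha_dual X" and le: "\<forall>n. cmod (y n) \<le> cmod (a n)"
  show "y \<in> alpha_dual X"
    unfolding alpha_dual_def
  proof (intro CollectI ballI)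
    fix x assume xX: "x \<in> X"
    have sa: "summable (\<lambda>n. cmod (a n * x n))" using aX xX unfolding alpha_dual_def by blast
    show "summable (\<lambda>n. cmod (y n * x n))"
    proof (rule summable_comparison_test'[OF sa, of 0])
      fix n
      have "cmod (y n) * cmod (x n) \<le> cmod (a n) * cmod (x n)"
        using le by (simp add: mult_right_mono)
      then show "norm (cmod (y n * x n)) \<le> cmod (a n * x n)" by (simp add: norm_mult)
    qed
  qed
qed

lemma normal_monotone: assumes "seq_normal L" shows "seq_monotone L"
  unfolding seq_monotone_def
proof (intro ballI allI)
  fix x J assume xL: "x \<in> L"
  have h: "\<forall>y. (\<forall>n. cmod (y n) \<le> cmod (x n)) \<longrightarrow> y \<in> L"
    using assms xL unfolding seq_normal_def by (rule bspec)
  have "\<forall>n. cmod (if n \<in> J then x n else 0) \<le> cmod (x n)" by simp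
  then show "(\<lambda>n. if n \<in> J then x n else 0) \<in> L"
    using h[rule_format, of "\<lambda>n. if n \<in> J then x n else 0"] by simp
qed

lemma x_in: assumes "1 < p"
  shows "(\<lambda>n. complex_of_real (inverse (real (Suc n)))) \<in> hp p"
proof -
  have eq: "real (Suc n) * cmod (complex_of_real (inverse (real (Suc n))) - complex_of_real (inverse (real (Suc (Suc n)))))
      = inverse (real (Suc (Suc n)))" for n
  proof -
    have "complex_of_real (inverse (real (Suc n))) - complex_of_real (inverse (real (Suc (Suc n))))
       = complex_of_real (inverse (real (Suc n)) - inverse (real (Suc (Suc n))))" by simp
    moreover have "inverse (real (Suc n)) - inverse (real (Suc (Suc n))) = inverse (real (Suc n) * real (Suc (Suc n)))"
      by (simp add: field_simps)
    ultimately have "cmod (complex_of_real (inverse (real (Suc n))) - complex_of_real (inverse (real (Suc (Suc n)))))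
        = inverse (real (Suc n) * real (Suc (Suc n)))"
      by (simp only: norm_of_real) simp
    then show ?thesis by (simp del: of_nat_Suc)
  qed
  have s0: "summable (\<lambda>n. real n powr (-p))"
    using summable_real_powr_iff assms by simp
  have s1: "summable (\<lambda>n. real (Suc n) powr (-p))"
    using summable_iff_shift[of "\<lambda>n. real n powr (-p)" 1] s0 by simp
  have s: "summable (\<lambda>n. (inverse (real (Suc (Suc n)))) powr p)"
  proof (rule summable_comparison_test'[OF s1, of 0])
    fix n :: nat
    have "(inverse (real (Suc (Suc n)))) powr p = real (Suc (Suc n)) powr (-p)"
      by (simp add: powr_minus inverse_powr del: of_nat_Suc)
    also have "\<dots> \<le> real (Suc n) powr (-p)"
      using assms by (intro powr_mono2') auto
    finally show "norm ((inverse (real (Suc (Suc n)))) powr p) \<le> real (Suc n) powr (-p)" by simp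
  qed
  have l: "(\<lambda>n. complex_of_real (inverse (real (Suc n)))) \<longlonglongrightarrow> 0"
  proof -
    have "(\<lambda>n. complex_of_real (inverse (real (Suc n)))) \<longlonglongrightarrow> complex_of_real 0"
      by (rule tendsto_of_real[OF LIMSEQ_inverse_real_of_nat])
    then show ?thesis by (simp only: of_real_0)
  qed
  have s': "summable (\<lambda>n. (real (Suc n) * cmod (complex_of_real (inverse (real (Suc n))) - complex_of_real (inverse (real (Suc (Suc n)))))) powr p)"
    unfolding eq by (rule s)
  show ?thesis unfolding hp_def mem_Collect_eq by (intro conjI s' l)
qed

lemma not_monotone: assumes "1 < p" shows "\<not> seq_monotone (hp p)"
proof
  assume m: "seq_monotone (hp p)"
  define x where "x = (\<lambda>n. complex_of_real (inverse (real (Suc n))))"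
  define y where "y = (\<lambda>n. if n \<in> {n. even n} then x n else 0)"
  have "y \<in> hp p"
  proof -
    have "x \<in> hp p" using x_in[OF assms] unfolding x_def .
    then have "\<forall>J. (\<lambda>n. if n \<in> J then x n else 0) \<in> hp p"
      using m unfolding seq_monotone_def by (rule bspec[rotated])
    then show ?thesis unfolding y_def by (rule spec)
  qed
  then have s: "summable (\<lambda>n. (real (Suc n) * cmod (y n - y (Suc n))) powr p)"
    unfolding hp_def mem_Collect_eq by (rule conjunct1)
  have ge: "(1/2) powr p \<le> (real (Suc n) * cmod (y n - y (Suc n))) powr p" for n
  proof -
    have "1/2 \<le> real (Suc n) * cmod (y n - y (Suc n))"
    proof (cases "even n")
      case True
      then have "y n - y (Suc n) = x n" by (simp add: y_def)
      moreover have "cmod (x n) = inverse (real (Suc n))" unfolding x_def by (simp only: norm_of_real) simp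
      ultimately have "real (Suc n) * cmod (y n - y (Suc n)) = real (Suc n) * inverse (real (Suc n))"
        by (simp only:)
      also have "\<dots> = 1" by (rule right_inverse) simp
      finally show ?thesis by linarith
    next
      case False
      then have "y n - y (Suc n) = - x (Suc n)" by (simp add: y_def)
      moreover have "cmod (x (Suc n)) = inverse (real (Suc (Suc n)))" unfolding x_def by (simp only: norm_of_real) simp
      ultimately have "real (Suc n) * cmod (y n - y (Suc n)) = real (Suc n) / real (Suc (Suc n))"
        by (simp only: norm_minus_cancel divide_inverse)
      also have "\<dots> \<ge> 1/2" by (simp add: field_simps)
      finally show ?thesis .
    qed
    then show ?thesis using assms by (intro powr_mono2) auto
  qed
  have "(\<lambda>n. (real (Suc n) * cmod (y n - y (Suc n))) powr p) \<longlonglongrightarrow> 0"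
    using summable_LIMSEQ_zero[OF s] .
  then have "eventually (\<lambda>n. (real (Suc n) * cmod (y n - y (Suc n))) powr p < (1/2) powr p) sequentially"
    by (rule order_tendstoD) simp
  then obtain n where "(real (Suc n) * cmod (y n - y (Suc n))) powr p < (1/2) powr p"
    using eventually_sequentially by auto
  with ge[of n] show False by linarith
qed

theorem corollary3p11:
  fixes p :: real
  assumes "1 < p"
  shows "\<not> seq_monotone (hp p) \<and> \<not> seq_normal (hp p) \<and> \<not> seq_perfect (hp p)"
proof -
  have a: "\<not> seq_monotone (hp p)" using not_monotone[OF assms] .
  have b: "\<not> seq_normal (hp p)"
  proof
    assume "seq_normal (hp p)"
    then have "seq_monotone (hp p)" by (rule normal_monotone)
    with a show False by contradiction
  qed
  have c: "\<not> seq_perfect (hp p)"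
  proof
    assume "seq_perfect (hp p)"
    then have "hp p = alpha_dual (alpha_dual (hp p))" unfolding seq_perfect_def .
    then have "seq_normal (hp p) = seq_normal (alpha_dual (alpha_dual (hp p)))" by (rule arg_cong)
    then have "seq_normal (hp p)" using alpha_dual_normal by (rule iffD2)
    with b show False by contradiction
  qed
  show ?thesis by (rule conjI[OF a conjI[OF b c]])
qed

end
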